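(* Let $d$ be a power of $2$, $1\le k\le d$, and $\delta>0$. Let $g_{a,c}(x)=a(x-c)\bmod d$. Let $L=O(\log^2(d/k))$ and $B=O(k\log(d/\delta))$, and let $(a_1,c_1),\ldots,(a_L,c_L)$ be any pairs of integers in $\{1,\ldots,d\}$ with each $a_\ell$ odd. Then there is a set $R\subseteq\{0,\ldots,d-1\}$ with $|R|=O\big(\sqrt{k\log(d/\delta)}\cdot\log^2(d/k)\big)$ such that for every $\ell\in\{1,\ldots,L\}$ and every $s\in\{0,\ldots,B-1\}$ there exist $r,r'\in R$ with $r-r'=g_{a_\ell,c_\ell}(s)$ or $r-r'=d-g_{a_\ell,c_\ell}(s)$. Consequently, for any $x^{(1)},\dots,x^{(n)}$ drawn from a distribution whose covariance matrix $T$ is circulant with first column $t$ (so $t_u=t_{d-u}$), reading only the entries indexed by $R$ of each sample yields measurements of all entries $t_{g_{a_\ell,c_\ell}(s)}$ read by the sparse Fourier transform procedure described in the context.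
   Context: The sparse Fourier transform procedure referred to: a randomized algorithm which, given $x\in\mathbb{R}^d$ ($d$ a power of 2), sparsity $k$ and error parameter $\delta$, chooses $L=O(\log^2(d/k))$ pairs $(a_\ell,c_\ell)$ uniformly from $\{1,\dots,d\}$ with $a_\ell$ odd, and reads only the blocks of entries $x_{g_{a_\ell,c_\ell}(0)},\dots,x_{g_{a_\ell,c_\ell}(B-1)}$ with $B=O(k\log(d/\delta))$. The implied constants in $|R|$ depend only on those in $L$ and $B$. *)

theory Defs
  imports Complex_Main
begin

definition g_map :: "nat \<Rightarrow> int \<Rightarrow> int \<Rightarrow> int \<Rightarrow> int" where
  "g_map d a c x = (a * (x - c)) mod int d"

end

theory Submission imports Defs begin
lemma diff_mod_cases:
  fixes x y g :: int and d :: nat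
  assumes "0 \<le> x" "x < int d" "0 \<le> y" "y < int d" "(x - y) mod int d = g"
  shows "x - y = g \<or> y - x = int d - g"
proof (cases "y \<le> x")
  case True
  then have "(x - y) mod int d = x - y" using assms by (intro mod_pos_pos_trivial) auto
  then show ?thesis using assms by simp
next
  case False
  have "(x - y) mod int d = (x - y + int d) mod int d" by simp
  also have "\<dots> = x - y + int d" using assms False by (intro mod_pos_pos_trivial) auto
  finally show ?thesis using assms by simp
qed

lemma cover_one:
  fixes a c s :: int and d m :: nat
  assumes "d > 0" "0 \<le> s" "s < int m * int m"
  shows "\<exists>i<m. \<exists>j<m. ((a * (int i * int m - c)) mod int d - (- a * int j) mod int d) mod int d
            = g_map d a c s"
proof -
  define i where "i = nat (s div int m)"
  define j where "j = nat (s mod int m)"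
  have mpos: "m > 0" using assms by (cases "m = 0") auto
  have si: "s = int i * int m + int j" using assms mpos unfolding i_def j_def by (simp add: pos_imp_zdiv_nonneg_iff)
  have "i < m"
  proof -
    have "s div int m * int m \<le> s" using mpos by (simp add: mult.commute mult_div_mod_eq minus_mod_eq_mult_div [symmetric])
    then have "s div int m * int m < int m * int m" using assms by linarith
    then have "s div int m < int m" using mpos by (simp add: mult_less_cancel_right)
    then show ?thesis unfolding i_def using mpos by (simp add: nat_less_iff pos_imp_zdiv_nonneg_iff assms)
  qed
  moreover have "j < m" unfolding j_def using mpos by (simp add: nat_less_iff)
  moreover have "((a * (int i * int m - c)) mod int d - (- a * int j) mod int d) mod int d
       = g_map d a c s"
    unfolding g_map_def si by (simp add: mod_diff_eq algebra_simps)
  ultimately show ?thesis by blast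
qed
theorem corollary1:
  fixes CL CB :: real
  assumes "CL > 0" and "CB > 0"
  shows "\<exists>C>0. \<forall>(d::nat) (k::nat) (\<delta>::real) (L::nat) (B::nat) (a::nat \<Rightarrow> int) (c::nat \<Rightarrow> int).
    (\<exists>m::nat. d = 2 ^ m) \<and> 1 \<le> k \<and> k \<le> d \<and> \<delta> > 0 \<and>
    real L \<le> CL * (ln (real d / real k))\<^sup>2 \<and>
    real B \<le> CB * real k * ln (real d / \<delta>) \<and>
    (\<forall>l\<in>{1..L}. a l \<in> {1..int d} \<and> odd (a l) \<and> c l \<in> {1..int d})
    \<longrightarrow> (\<exists>R. R \<subseteq> {0..<int d} \<and>
          real (card R) \<le> C * sqrt (real k * ln (real d / \<delta>)) * (ln (real d / real k))\<^sup>2 \<and>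
          (\<forall>l\<in>{1..L}. \<forall>s\<in>{0..<int B}. \<exists>r\<in>R. \<exists>r'\<in>R.
              r - r' = g_map d (a l) (c l) s \<or> r - r' = int d - g_map d (a l) (c l) s))"
proof (intro exI[of _ "4 * CL * sqrt CB"] conjI allI impI)
  show "4 * CL * sqrt CB > 0" using assms by simp
next
  fix d k :: nat and \<delta> :: real and L B :: nat and a c :: "nat \<Rightarrow> int"
  assume H: "(\<exists>m::nat. d = 2 ^ m) \<and> 1 \<le> k \<and> k \<le> d \<and> \<delta> > 0 \<and>
    real L \<le> CL * (ln (real d / real k))\<^sup>2 \<and>
    real B \<le> CB * real k * ln (real d / \<delta>) \<and>
    (\<forall>l\<in>{1..L}. a l \<in> {1..int d} \<and> odd (a l) \<and> c l \<in> {1..int d})"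
  define C where "C = 4 * CL * sqrt CB"
  define lnA where "lnA = ln (real d / real k)"
  define lnB where "lnB = ln (real d / \<delta>)"
  have dpos: "d > 0" using H by auto
  have kpos: "real k \<ge> 1" using H by auto
  have LB: "real L \<le> CL * lnA\<^sup>2" using H lnA_def by simp
  have BB: "real B \<le> CB * real k * lnB" using H lnB_def by simp
  have "0 \<le> CB * real k * lnB" using BB by linarith
  then have lnBnn: "lnB \<ge> 0" using assms kpos
  proof -
    have "CB * real k > 0" using assms kpos by simp
    then show ?thesis using \<open>0 \<le> CB * real k * lnB\<close> by (simp add: zero_le_mult_iff)
  qed
  have Cnn: "0 \<le> C * sqrt (real k * lnB) * lnA\<^sup>2" unfolding C_def using assms lnBnn by simp
  show "\<exists>R. R \<subseteq> {0..<int d} \<and>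
          real (card R) \<le> (4 * CL * sqrt CB) * sqrt (real k * ln (real d / \<delta>)) * (ln (real d / real k))\<^sup>2 \<and>
          (\<forall>l\<in>{1..L}. \<forall>s\<in>{0..<int B}. \<exists>r\<in>R. \<exists>r'\<in>R.
              r - r' = g_map d (a l) (c l) s \<or> r - r' = int d - g_map d (a l) (c l) s)"
  proof (cases "B = 0 \<or> L = 0")
    case True
    show ?thesis
      by (rule exI[of _ "{}"]) (use True Cnn in \<open>auto simp: C_def lnA_def lnB_def\<close>)
  next
    case False
    then have B1: "real B \<ge> 1" and L1: "L \<ge> 1" by auto
    define m where "m = nat (ceiling (sqrt (real B)))"
    have mB: "int m * int m \<ge> int B"
    proof -
      have "real m \<ge> sqrt (real B)" unfolding m_def by linarith
      then have "real m * real m \<ge> sqrt (real B) * sqrt (real B)"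
        by (intro mult_mono) auto
      then have "real m * real m \<ge> real B" by simp
      then show ?thesis by (metis of_int_of_nat_eq of_int_le_iff of_nat_mult of_nat_le_iff)
    qed
    have mle: "real m \<le> 2 * sqrt CB * sqrt (real k * lnB)"
    proof -
      have "real m = of_int (ceiling (sqrt (real B)))" unfolding m_def by simp
      also have "\<dots> \<le> sqrt (real B) + 1" by linarith
      finally have "real m \<le> sqrt (real B) + 1" .
      also have "\<dots> \<le> 2 * sqrt (real B)" using B1 by simp
      also have "sqrt (real B) \<le> sqrt (CB * real k * lnB)" using BB by simp
      also have "\<dots> = sqrt CB * sqrt (real k * lnB)" by (simp add: real_sqrt_mult mult.assoc)
      finally show ?thesis by simp
    qed
    define F where "F l = (\<lambda>i::nat. (a l * (int i * int m - c l)) mod int d) ` {..<m}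
       \<union> (\<lambda>j::nat. (- a l * int j) mod int d) ` {..<m}" for l
    define R where "R = (\<Union>l\<in>{1..L}. F l)"
    have Fcard: "card (F l) \<le> 2 * m" for l
    proof -
      have "card (F l) \<le> card ((\<lambda>i::nat. (a l * (int i * int m - c l)) mod int d) ` {..<m})
         + card ((\<lambda>j::nat. (- a l * int j) mod int d) ` {..<m})"
        unfolding F_def by (rule card_Un_le)
      also have "\<dots> \<le> m + m" by (intro add_mono card_image_le[THEN order_trans]) auto
      finally show ?thesis by simp
    qed
    have "card R \<le> (\<Sum>l\<in>{1..L}. card (F l))" unfolding R_def by (rule card_UN_le) simp
    also have "\<dots> \<le> (\<Sum>l\<in>{1..L}. 2 * m)" by (intro sum_mono Fcard)
    also have "\<dots> = L * (2 * m)" by simp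
    finally have "card R \<le> L * (2 * m)" .
    then have cR: "real (card R) \<le> real L * (2 * real m)"
      by (metis of_nat_le_iff of_nat_mult of_nat_numeral)
    also have "\<dots> \<le> (CL * lnA\<^sup>2) * (2 * (2 * sqrt CB * sqrt (real k * lnB)))"
      using LB mle by (intro mult_mono) auto
    also have "\<dots> = C * sqrt (real k * lnB) * lnA\<^sup>2" unfolding C_def by (simp add: algebra_simps)
    finally have card_ok: "real (card R) \<le> C * sqrt (real k * lnB) * lnA\<^sup>2" .
    have sub: "R \<subseteq> {0..<int d}" unfolding R_def F_def using dpos by auto
    have cov: "\<exists>r\<in>R. \<exists>r'\<in>R. r - r' = g_map d (a l) (c l) s \<or> r - r' = int d - g_map d (a l) (c l) s"
      if l: "l \<in> {1..L}" and s: "s \<in> {0..<int B}" for l s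
    proof -
      have "s < int m * int m" using s mB by auto
      then obtain i j where ij: "i < m" "j < m" and
        eq: "((a l * (int i * int m - c l)) mod int d - (- a l * int j) mod int d) mod int d
            = g_map d (a l) (c l) s"
        using cover_one[of d s m "a l" "c l"] dpos s by auto
      define x where "x = (a l * (int i * int m - c l)) mod int d"
      define y where "y = (- a l * int j) mod int d"
      have xR: "x \<in> R" unfolding R_def F_def x_def using l ij by blast
      have yR: "y \<in> R" unfolding R_def F_def y_def using l ij by blast
      have "x - y = g_map d (a l) (c l) s \<or> y - x = int d - g_map d (a l) (c l) s"
        by (rule diff_mod_cases) (use dpos eq in \<open>auto simp: x_def y_def\<close>)
      then show ?thesis using xR yR by blast
    qed
    show ?thesis using sub card_ok cov unfolding C_def lnA_def lnB_def by blast
  qed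
qed

end
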